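(* Let $D=\operatorname{diag}(d_1,\dots,d_n)$ with $d_i>0$, $Q$ a positive diagonal $n\times n$ matrix, $1\le p\le\infty$, and $L\in\mathbb{R}^{N\times N}$ symmetric with nonpositive off-diagonal entries and $L\mathbf{1}=0$. Then $M^+_{p,Q}[-L\otimes D]=0$.
   Context: On $\mathbb{R}^{nN}$, with $u=(u_1^T,\dots,u_N^T)^T$, $\|u\|_{p,Q}=\big\|(\|Qu_1\|_p,\dots,\|Qu_N\|_p)^T\big\|_p$, and $M^+_{p,Q}[f]=\sup_{u\neq v}\lim_{h\to0^+}\frac1h\left(\frac{\|u-v+h(f(u)-f(v))\|_{p,Q}}{\|u-v\|_{p,Q}}-1\right)$, applied to the linear map $u\mapsto-(L\otimes D)u$. *)

theory Defs
  imports "HOL-Analysis.Analysis"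
begin

definition pnorm :: "ereal \<Rightarrow> real^'n \<Rightarrow> real" where
  "pnorm p x = (if p = \<infinity> then Max (range (\<lambda>i. \<bar>x $ i\<bar>))
               else (\<Sum>i\<in>UNIV. \<bar>x $ i\<bar> powr real_of_ereal p) powr (1 / real_of_ereal p))"

text \<open>Block vectors u = (u_1,...,u_N) with u_i in R^n are elements of real^'n^'N, u $ i = u_i.
  norm_pQ p Q u = p-norm of the vector (p-norm of Q u_i)_i.\<close>
definition norm_pQ :: "ereal \<Rightarrow> real^'n^'n \<Rightarrow> real^'n^'N \<Rightarrow> real" where
  "norm_pQ p Q u = pnorm p (\<chi> i. pnorm p (Q *v (u $ i)))"

definition M_plus :: "ereal \<Rightarrow> real^'n^'n \<Rightarrow> (real^'n^'N \<Rightarrow> real^'n^'N) \<Rightarrow> real" where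
  "M_plus p Q f = Sup {Lim (at_right 0)
        (\<lambda>h::real. (norm_pQ p Q (u - v + h *\<^sub>R (f u - f v)) / norm_pQ p Q (u - v) - 1) / h)
      | u v. u \<noteq> v}"

definition kron_apply :: "real^'N^'N \<Rightarrow> real^'n^'n \<Rightarrow> real^'n^'N \<Rightarrow> real^'n^'N" where
  "kron_apply L D u = (\<chi> i. \<Sum>j\<in>UNIV. L $ i $ j *\<^sub>R (D *v (u $ j)))"

definition is_diag :: "real^'n^'n \<Rightarrow> bool" where
  "is_diag A \<longleftrightarrow> (\<forall>i j. i \<noteq> j \<longrightarrow> A $ i $ j = 0)"

end

theory Submission
  imports Defs
begin

lemma abs_powr_convex:
  fixes P :: real assumes P: "P \<ge> 1"
  shows "convex_on UNIV (\<lambda>t::real. \<bar>t\<bar> powr P)"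
proof (rule convex_onI)
  fix t x y :: real assume t: "0 < t" "t < 1"
  define a where "a = \<bar>x\<bar>"
  define b where "b = \<bar>y\<bar>"
  have ab: "a \<ge> 0" "b \<ge> 0" by (auto simp: a_def b_def)
  have "\<bar>(1 - t) *\<^sub>R x + t *\<^sub>R y\<bar> \<le> (1 - t) * a + t * b"
  proof -
    have "\<bar>(1 - t) * x + t * y\<bar> \<le> \<bar>(1 - t) * x\<bar> + \<bar>t * y\<bar>" by (rule abs_triangle_ineq)
    also have "\<dots> = (1 - t) * a + t * b" using t by (simp add: abs_mult a_def b_def)
    finally show ?thesis by simp
  qed
  hence "\<bar>(1 - t) *\<^sub>R x + t *\<^sub>R y\<bar> powr P \<le> ((1 - t) * a + t * b) powr P"
    using P by (intro powr_mono2) auto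
  also have "\<dots> \<le> (1 - t) * a powr P + t * b powr P"
  proof (cases "a > 0 \<and> b > 0")
    case True
    then show ?thesis using convex_onD[OF powr_convex[OF P], of t a b] t by auto
  next
    case False
    have key: "(s * z) powr P \<le> s * z powr P" if "0 \<le> s" "s \<le> 1" "0 \<le> z" for s z :: real
    proof -
      have "(s * z) powr P = s powr P * z powr P" using that by (simp add: powr_mult)
      also have "\<dots> \<le> s powr 1 * z powr P"
        using that P by (intro mult_right_mono powr_mono') auto
      finally show ?thesis using that by simp
    qed
    show ?thesis
    proof (cases "a = 0")
      case True
      then show ?thesis using key[of t b] t ab P by auto
    next
      case False
      then have "b = 0" using \<open>\<not> (a > 0 \<and> b > 0)\<close> ab by auto
      then show ?thesis using key[of "1 - t" a] t ab P by auto
    qed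
  qed
  finally show "\<bar>(1 - t) *\<^sub>R x + t *\<^sub>R y\<bar> powr P \<le> (1 - t) * \<bar>x\<bar> powr P + t * \<bar>y\<bar> powr P"
    by (simp add: a_def b_def)
qed auto

lemma convex_right_quot:
  fixes f :: "real \<Rightarrow> real"
  assumes "convex_on UNIV f"
  shows "\<exists>D. ((\<lambda>h. (f h - f 0) / h) \<longlongrightarrow> D) (at_right 0)"
proof -
  have mono: "(f a - f 0) / a \<le> (f b - f 0) / b" if "0 < a" "a \<le> b" for a b
  proof (cases "a = b")
    case False
    then have "a < b" using that by auto
    from convex_on_slope_le(1)[OF assms _ _ that(1) this] that show ?thesis
      by (simp add: divide_simps) (simp add: algebra_simps)
  qed simp
  have bnd: "f 0 - f (-1) \<le> (f a - f 0) / a" if "0 < a" for a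
  proof -
    from convex_on_slope_le[OF assms _ _ _ that, of "-1"]
    have "(f (-1) - f 0) / (-1 - 0) \<le> (f (-1) - f a) / (-1 - a)"
         "(f (-1) - f a) / (-1 - a) \<le> (f 0 - f a) / (0 - a)" by auto
    moreover have "(f (-1) - f 0) / (-1 - 0) = f 0 - f (-1)" by simp
    moreover have "(f 0 - f a) / (0 - a) = (f a - f 0) / a"
      by (metis minus_diff_eq minus_divide_divide diff_0)
    ultimately show ?thesis by linarith
  qed
  have "((\<lambda>h. (f h - f 0) / h) \<longlongrightarrow> Inf ((\<lambda>h. (f h - f 0) / h) ` ({0<..} \<inter> UNIV)))
     (at 0 within ({0<..} \<inter> UNIV))"
    by (rule Lim_right_bound[where K = "f 0 - f (-1)"]) (use mono bnd in auto)
  then show ?thesis by auto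
qed



lemma convex_affine_comp:
  fixes \<psi> :: "real \<Rightarrow> real"
  assumes "convex_on UNIV \<psi>"
  shows "convex_on UNIV (\<lambda>h. \<psi> (\<alpha> + h * \<beta>))"
proof (rule convex_onI)
  fix t x y :: real assume t: "0 < t" "t < 1"
  have "\<alpha> + ((1 - t) *\<^sub>R x + t *\<^sub>R y) * \<beta> = (1 - t) *\<^sub>R (\<alpha> + x * \<beta>) + t *\<^sub>R (\<alpha> + y * \<beta>)"
    by (simp add: algebra_simps)
  then show "\<psi> (\<alpha> + ((1 - t) *\<^sub>R x + t *\<^sub>R y) * \<beta>) \<le> (1 - t) * \<psi> (\<alpha> + x * \<beta>) + t * \<psi> (\<alpha> + y * \<beta>)"
    using convex_onD[OF assms, of t] t by auto
qed auto

lemma convex_sum_fun: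
  fixes g :: "'a \<Rightarrow> real \<Rightarrow> real"
  assumes "finite S" "\<And>i. i \<in> S \<Longrightarrow> convex_on UNIV (g i)"
  shows "convex_on UNIV (\<lambda>h. \<Sum>i\<in>S. g i h)"
  using assms
proof (induction S rule: finite_induct)
  case empty
  then show ?case by (simp add: convex_on_const)
next
  case (insert x F)
  then show ?case by (auto intro!: convex_on_add)
qed

lemma convex_Max:
  fixes g :: "'a::finite \<Rightarrow> real \<Rightarrow> real"
  assumes "\<And>i. convex_on UNIV (g i)"
  shows "convex_on UNIV (\<lambda>h. Max (range (\<lambda>i. g i h)))"
proof (rule convex_onI)
  fix t x y :: real assume t: "0 < t" "t < 1"
  show "Max (range (\<lambda>i. g i ((1 - t) *\<^sub>R x + t *\<^sub>R y)))
        \<le> (1 - t) * Max (range (\<lambda>i. g i x)) + t * Max (range (\<lambda>i. g i y))"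
  proof (subst Max_le_iff, simp, simp, clarify)
    fix i
    have "g i ((1 - t) *\<^sub>R x + t *\<^sub>R y) \<le> (1 - t) * g i x + t * g i y"
      using convex_onD[OF assms, of t] t by auto
    also have "\<dots> \<le> (1 - t) * Max (range (\<lambda>i. g i x)) + t * Max (range (\<lambda>i. g i y))"
      using t by (intro add_mono mult_left_mono) auto
    finally show "g i ((1 - t) *\<^sub>R x + t *\<^sub>R y) \<le> (1 - t) * Max (range (\<lambda>i. g i x)) + t * Max (range (\<lambda>i. g i y))" .
  qed
qed auto

lemma lim_le0:
  fixes g :: "real \<Rightarrow> real"
  assumes g0: "g 0 > 0"
    and D: "((\<lambda>h. (g h - g 0) / h) \<longlongrightarrow> D) (at_right 0)"
    and ev: "eventually (\<lambda>h. g h \<le> g 0) (at_right 0)"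
  shows "Lim (at_right 0) (\<lambda>h. (g h / g 0 - 1) / h) \<le> 0"
proof -
  have eq: "(\<lambda>h. (g h / g 0 - 1) / h) = (\<lambda>h. ((g h - g 0) / h) / g 0)"
    using g0 by (auto simp: divide_simps)
  have T: "((\<lambda>h. (g h / g 0 - 1) / h) \<longlongrightarrow> D / g 0) (at_right 0)"
    unfolding eq by (intro tendsto_divide D tendsto_const) (use g0 in auto)
  have "D / g 0 \<le> 0"
  proof (rule tendsto_upperbound[OF T])
    show "\<forall>\<^sub>F h in at_right 0. (g h / g 0 - 1) / h \<le> 0"
      using ev eventually_at_right_less[of "0::real"]
    proof eventually_elim
      case (elim h)
      then show ?case using g0 by (auto simp: divide_simps)
    qed
  qed simp
  moreover have "Lim (at_right 0) (\<lambda>h. (g h / g 0 - 1) / h) = D / g 0"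
    by (rule tendsto_Lim[OF _ T]) simp
  ultimately show ?thesis by simp
qed

lemma powr_quot:
  fixes F :: "real \<Rightarrow> real"
  assumes D: "((\<lambda>h. (F h - F 0) / h) \<longlongrightarrow> D) (at_right 0)" and F0: "F 0 > 0"
  shows "\<exists>E. ((\<lambda>h. (F h powr r - F 0 powr r) / h) \<longlongrightarrow> E) (at_right 0)"
proof -
  have "(F has_field_derivative D) (at 0 within {0<..})"
    using D by (simp add: has_field_derivative_iff)
  from DERIV_chain'[OF this has_real_derivative_powr[OF F0, of r]]
  have "((\<lambda>h. F h powr r) has_field_derivative r * F 0 powr (r - 1) * D) (at 0 within {0<..})" .
  then show ?thesis by (auto simp: has_field_derivative_iff)
qed

lemma diag_mv:
  fixes A :: "real^'n^'n"
  assumes "is_diag A"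
  shows "(A *v w) $ k = A $ k $ k * w $ k"
proof -
  have "(A *v w) $ k = (\<Sum>l\<in>UNIV. if l = k then A $ k $ k * w $ k else 0)"
    unfolding matrix_vector_mult_def vec_lambda_beta
    by (rule sum.cong) (use assms in \<open>auto simp: is_diag_def\<close>)
  then show ?thesis by simp
qed

lemma ds_powr:
  fixes Pm :: "'a::finite \<Rightarrow> 'a \<Rightarrow> real" and r :: real
  assumes r: "r \<ge> 1" and nn: "\<And>i j. Pm i j \<ge> 0"
    and row: "\<And>i. (\<Sum>j\<in>UNIV. Pm i j) = 1" and col: "\<And>j. (\<Sum>i\<in>UNIV. Pm i j) = 1"
  shows "(\<Sum>i\<in>UNIV. \<bar>\<Sum>j\<in>UNIV. Pm i j * y j\<bar> powr r) \<le> (\<Sum>j\<in>UNIV. \<bar>y j\<bar> powr r)"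
proof -
  have "(\<Sum>i\<in>UNIV. \<bar>\<Sum>j\<in>UNIV. Pm i j * y j\<bar> powr r) \<le> (\<Sum>i\<in>UNIV. \<Sum>j\<in>UNIV. Pm i j * \<bar>y j\<bar> powr r)"
  proof (rule sum_mono)
    fix i
    show "\<bar>\<Sum>j\<in>UNIV. Pm i j * y j\<bar> powr r \<le> (\<Sum>j\<in>UNIV. Pm i j * \<bar>y j\<bar> powr r)"
      using convex_on_sum[OF _ UNIV_not_empty abs_powr_convex[OF r], of "Pm i" y] row nn
      by auto
  qed
  also have "\<dots> = (\<Sum>j\<in>UNIV. (\<Sum>i\<in>UNIV. Pm i j) * \<bar>y j\<bar> powr r)"
    by (subst sum.swap) (simp add: sum_distrib_right)
  also have "\<dots> = (\<Sum>j\<in>UNIV. \<bar>y j\<bar> powr r)" using col by simp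
  finally show ?thesis .
qed

lemma ds_max:
  fixes Pm :: "'a::finite \<Rightarrow> 'a \<Rightarrow> real"
  assumes nn: "\<And>j. Pm i j \<ge> 0"
    and row: "(\<Sum>j\<in>UNIV. Pm i j) = 1" and M: "\<And>j. \<bar>y j\<bar> \<le> M"
  shows "\<bar>\<Sum>j\<in>UNIV. Pm i j * y j\<bar> \<le> M"
proof -
  have "\<bar>\<Sum>j\<in>UNIV. Pm i j * y j\<bar> \<le> (\<Sum>j\<in>UNIV. \<bar>Pm i j * y j\<bar>)" by (rule sum_abs)
  also have "\<dots> \<le> (\<Sum>j\<in>UNIV. Pm i j * M)"
    by (intro sum_mono) (use nn M in \<open>auto simp: abs_mult intro: mult_left_mono\<close>)
  also have "\<dots> = M" using row by (simp flip: sum_distrib_right)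
  finally show ?thesis .
qed



lemma norm_fin:
  fixes Q :: "real^'n^'n" and w :: "real^'n^'N"
  assumes "is_diag Q" "p \<noteq> \<infinity>" "1 \<le> p"
  shows "norm_pQ p Q w = (\<Sum>i\<in>UNIV. \<Sum>k\<in>UNIV. \<bar>Q $ k $ k * w $ i $ k\<bar> powr real_of_ereal p) powr (1 / real_of_ereal p)"
proof -
  define P where "P = real_of_ereal p"
  have P: "P \<ge> 1" using assms(2,3) unfolding P_def by (cases p) auto
  have inner: "((\<Sum>k\<in>UNIV. \<bar>Q $ k $ k * w $ i $ k\<bar> powr P) powr (1 / P)) powr P
      = (\<Sum>k\<in>UNIV. \<bar>Q $ k $ k * w $ i $ k\<bar> powr P)" for i
    using P by (simp add: powr_powr sum_nonneg)
  show ?thesis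
    unfolding norm_pQ_def pnorm_def using assms(2)
    by (simp add: diag_mv[OF assms(1)] inner flip: P_def)
qed

lemma norm_inf:
  fixes Q :: "real^'n^'n" and w :: "real^'n^'N"
  assumes "is_diag Q"
  shows "norm_pQ \<infinity> Q w = Max (range (\<lambda>i. Max (range (\<lambda>k. \<bar>Q $ k $ k * w $ i $ k\<bar>))))"
proof -
  have "\<bar>Max (range (\<lambda>k. \<bar>Q $ k $ k * w $ i $ k\<bar>))\<bar> = Max (range (\<lambda>k. \<bar>Q $ k $ k * w $ i $ k\<bar>))" for i
  proof -
    obtain k0 :: 'n where True by simp
    have "0 \<le> \<bar>Q $ k0 $ k0 * w $ i $ k0\<bar>" by simp
    also have "\<dots> \<le> Max (range (\<lambda>k. \<bar>Q $ k $ k * w $ i $ k\<bar>))" by (rule Max_ge) auto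
    finally show ?thesis by simp
  qed
  then show ?thesis
    unfolding norm_pQ_def pnorm_def by (simp add: diag_mv[OF assms(1)])
qed



lemma key:
  fixes D Q :: "real^'n^'n" and L :: "real^'N^'N" and p :: ereal and x :: "real^'n^'N"
  assumes dD: "is_diag D" and pD: "\<forall>i. D $ i $ i > 0"
    and dQ: "is_diag Q" and pQ: "\<forall>i. Q $ i $ i > 0"
    and p1: "1 \<le> p"
    and sym: "transpose L = L"
    and off: "\<forall>i j. i \<noteq> j \<longrightarrow> L $ i $ j \<le> 0"
    and row0: "L *v vec 1 = 0"
    and x0: "x \<noteq> 0"
  shows "Lim (at_right 0) (\<lambda>h. (norm_pQ p Q (x + h *\<^sub>R (- kron_apply L D x)) / norm_pQ p Q x - 1) / h) \<le> 0"
proof -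
  define b where "b = - kron_apply L D x"
  define c where "c k = Q $ k $ k" for k
  define d where "d k = D $ k $ k" for k
  define y where "y k j = c k * x $ j $ k" for k j
  define Pm where "Pm h k i j = (if i = j then 1 else 0) - h * d k * L $ i $ j" for h k i j
  have cpos: "c k > 0" for k using pQ by (simp add: c_def)
  have dpos: "d k > 0" for k using pD by (simp add: d_def)
  have bent: "b $ i $ k = - (\<Sum>j\<in>UNIV. L $ i $ j * (d k * x $ j $ k))" for i k
    unfolding b_def kron_apply_def d_def by (simp add: sum_component diag_mv[OF dD])
  have ent: "c k * (x $ i $ k + h * b $ i $ k) = (\<Sum>j\<in>UNIV. Pm h k i j * y k j)" for h i k
  proof -
    have "(\<Sum>j\<in>UNIV. Pm h k i j * y k j)
        = (\<Sum>j\<in>UNIV. (if i = j then y k j else 0)) - (\<Sum>j\<in>UNIV. h * c k * (L $ i $ j * (d k * x $ j $ k)))"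
      unfolding Pm_def y_def sum_subtractf[symmetric] by (rule sum.cong) (auto simp: algebra_simps)
    also have "\<dots> = c k * (x $ i $ k + h * b $ i $ k)"
      by (simp add: bent y_def sum_distrib_left[symmetric] algebra_simps)
    finally show ?thesis by simp
  qed
  have ent2: "c k * x $ i $ k + h * (c k * b $ i $ k) = (\<Sum>j\<in>UNIV. Pm h k i j * y k j)" for h i k
    using ent[of k i h] by (simp add: distrib_left mult.left_commute)
  have rowL: "(\<Sum>j\<in>UNIV. L $ i $ j) = 0" for i
    using arg_cong[OF row0, of "\<lambda>v. v $ i"] by (simp add: matrix_vector_mult_def)
  have colL: "(\<Sum>i\<in>UNIV. L $ i $ j) = 0" for j
  proof -
    have "L $ i $ j = L $ j $ i" for i
      using arg_cong[OF sym, of "\<lambda>M. M $ i $ j"] by (simp add: transpose_def)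
    then show ?thesis using rowL[of j] by simp
  qed
  have ev: "\<forall>\<^sub>F h in at_right 0. 0 < h \<and> (\<forall>k i. h * d k * L $ i $ i \<le> 1)"
  proof -
    have "\<forall>\<^sub>F h in at_right 0. h * d k * L $ i $ i \<le> 1" for k i
    proof -
      have "((\<lambda>h. h * d k * L $ i $ i) \<longlongrightarrow> 0 * d k * L $ i $ i) (at_right (0::real))"
        by (intro tendsto_intros)
      then have "\<forall>\<^sub>F h in at_right 0. h * d k * L $ i $ i < 1" by (rule order_tendstoD(2)) simp
      then show ?thesis by (rule eventually_mono) simp
    qed
    then have "\<forall>\<^sub>F h in at_right 0. \<forall>k i. h * d k * L $ i $ i \<le> 1"
      by (intro eventually_all_finite)
    then show ?thesis using eventually_at_right_less[of "0::real"] by eventually_elim auto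
  qed
  have Pprops: "(\<forall>i j. Pm h k i j \<ge> 0) \<and> (\<forall>i. (\<Sum>j\<in>UNIV. Pm h k i j) = 1) \<and> (\<forall>j. (\<Sum>i\<in>UNIV. Pm h k i j) = 1)"
    if h: "0 < h" "\<forall>k i. h * d k * L $ i $ i \<le> 1" for h k
  proof (intro conjI allI)
    fix i j
    show "Pm h k i j \<ge> 0"
    proof (cases "i = j")
      case True then show ?thesis using h by (simp add: Pm_def)
    next
      case False
      then have "L $ i $ j \<le> 0" using off by auto
      moreover have "h * d k > 0" using h dpos by simp
      ultimately show ?thesis using False by (simp add: Pm_def mult_nonneg_nonpos)
    qed
  next
    fix i
    show "(\<Sum>j\<in>UNIV. Pm h k i j) = 1"
      unfolding Pm_def using rowL[of i] by (simp add: sum_subtractf sum_distrib_left[symmetric])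
  next
    fix j
    show "(\<Sum>i\<in>UNIV. Pm h k i j) = 1"
      unfolding Pm_def using colL[of j] by (simp add: sum_subtractf sum_distrib_left[symmetric])
  qed
  obtain i0 k0 where ik0: "x $ i0 $ k0 \<noteq> 0" using x0 by (auto simp: vec_eq_iff)
  have y0: "\<bar>y k0 i0\<bar> > 0" using ik0 cpos[of k0] by (simp add: y_def)
  define g where "g h = norm_pQ p Q (x + h *\<^sub>R b)" for h
  have gx: "g 0 = norm_pQ p Q x" by (simp add: g_def)
  have comp: "(x + h *\<^sub>R b) $ i $ k = x $ i $ k + h * b $ i $ k" for h i k by simp
  have main: "(\<exists>D. ((\<lambda>h. (g h - g 0) / h) \<longlongrightarrow> D) (at_right 0)) \<and> g 0 > 0
       \<and> (\<forall>\<^sub>F h in at_right 0. g h \<le> g 0)"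
  proof (cases "p = \<infinity>")
    case False
    define P where "P = real_of_ereal p"
    have P: "P \<ge> 1" using False p1 unfolding P_def by (cases p) auto
    define F where "F h = (\<Sum>i\<in>UNIV. \<Sum>k\<in>UNIV. \<bar>c k * x $ i $ k + h * (c k * b $ i $ k)\<bar> powr P)" for h
    have gF: "g h = F h powr (1 / P)" for h
      unfolding g_def F_def norm_fin[OF dQ False p1] P_def[symmetric] comp c_def
      by (simp add: algebra_simps)
    have Fent: "F h = (\<Sum>k\<in>UNIV. \<Sum>i\<in>UNIV. \<bar>\<Sum>j\<in>UNIV. Pm h k i j * y k j\<bar> powr P)" for h
      unfolding F_def ent2 by (subst sum.swap) simp
    have F0: "F 0 = (\<Sum>k\<in>UNIV. \<Sum>j\<in>UNIV. \<bar>y k j\<bar> powr P)"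
      unfolding F_def y_def by (subst sum.swap) simp
    have Fpos: "F 0 > 0"
    proof -
      have "0 < \<bar>y k0 i0\<bar> powr P" using y0 by simp
      also have "\<dots> \<le> (\<Sum>j\<in>UNIV. \<bar>y k0 j\<bar> powr P)" by (rule member_le_sum) auto
      also have "\<dots> \<le> (\<Sum>k\<in>UNIV. \<Sum>j\<in>UNIV. \<bar>y k j\<bar> powr P)"
        by (rule member_le_sum) (auto intro: sum_nonneg)
      finally show ?thesis using F0 by simp
    qed
    have Fcvx: "convex_on UNIV F"
      unfolding F_def
      by (intro convex_sum_fun convex_affine_comp abs_powr_convex[OF P]) auto
    obtain DF where DF: "((\<lambda>h. (F h - F 0) / h) \<longlongrightarrow> DF) (at_right 0)"
      using convex_right_quot[OF Fcvx] by blast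
    have "\<exists>E. ((\<lambda>h. (g h - g 0) / h) \<longlongrightarrow> E) (at_right 0)"
      unfolding gF using powr_quot[OF DF Fpos] .
    moreover have "g 0 > 0" unfolding gF using Fpos by simp
    moreover have "\<forall>\<^sub>F h in at_right 0. g h \<le> g 0"
      using ev
    proof eventually_elim
      case (elim h)
      have "F h \<le> F 0"
        unfolding Fent[of h] F0
        by (rule sum_mono, rule ds_powr[OF P]) (use Pprops[OF elim[THEN conjunct1] elim[THEN conjunct2]] in auto)
      then show ?case unfolding gF using P by (intro powr_mono2) (auto simp: F_def intro!: sum_nonneg)
    qed
    ultimately show ?thesis by blast
  next
    case True
    have gM: "g h = Max (range (\<lambda>i. Max (range (\<lambda>k. \<bar>c k * x $ i $ k + h * (c k * b $ i $ k)\<bar>))))" for h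
      unfolding g_def True norm_inf[OF dQ] comp c_def by (simp add: algebra_simps)
    have gMe: "g h = Max (range (\<lambda>i. Max (range (\<lambda>k. \<bar>\<Sum>j\<in>UNIV. Pm h k i j * y k j\<bar>))))" for h
      unfolding gM ent2 by simp
    have ge: "\<bar>y k j\<bar> \<le> g 0" for k j
    proof -
      have "\<bar>y k j\<bar> \<le> Max (range (\<lambda>k. \<bar>c k * x $ j $ k + 0 * (c k * b $ j $ k)\<bar>))"
        by (rule Max_ge) (auto simp: y_def)
      also have "\<dots> \<le> g 0" unfolding gM by (rule Max_ge) auto
      finally show ?thesis .
    qed
    have abscvx: "convex_on UNIV (\<lambda>t::real. \<bar>t\<bar>)"
      using abs_powr_convex[of 1] by simp
    have gcvx: "convex_on UNIV g"
      unfolding gM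
      by (intro convex_Max convex_affine_comp[OF abscvx])
    have "\<exists>E. ((\<lambda>h. (g h - g 0) / h) \<longlongrightarrow> E) (at_right 0)"
      using convex_right_quot[OF gcvx] .
    moreover have "g 0 > 0" using ge[of k0 i0] y0 by simp
    moreover have "\<forall>\<^sub>F h in at_right 0. g h \<le> g 0"
      using ev
    proof eventually_elim
      case (elim h)
      note PP = Pprops[OF elim[THEN conjunct1] elim[THEN conjunct2]]
      show ?case unfolding gMe[of h]
        by (subst Max_le_iff, simp, simp, clarify, subst Max_le_iff, simp, simp, clarify)
           (rule ds_max, use PP ge in auto)
    qed
    ultimately show ?thesis by blast
  qed
  then obtain DG where DG: "((\<lambda>h. (g h - g 0) / h) \<longlongrightarrow> DG) (at_right 0)" by blast
  have "Lim (at_right 0) (\<lambda>h. (g h / g 0 - 1) / h) \<le> 0"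
    using lim_le0[OF _ DG] main by blast
  then show ?thesis unfolding gx by (simp add: g_def b_def)
qed



lemma norm_pos:
  fixes Q :: "real^'n^'n" and x :: "real^'n^'N"
  assumes dQ: "is_diag Q" and pQ: "\<forall>i. Q $ i $ i > 0" and p1: "1 \<le> p" and x0: "x \<noteq> 0"
  shows "norm_pQ p Q x > 0"
proof -
  obtain i0 k0 where ik0: "x $ i0 $ k0 \<noteq> 0" using x0 by (auto simp: vec_eq_iff)
  have t0: "\<bar>Q $ k0 $ k0 * x $ i0 $ k0\<bar> > 0" using ik0 pQ[rule_format, of k0] by auto
  show ?thesis
  proof (cases "p = \<infinity>")
    case True
    have "\<bar>Q $ k0 $ k0 * x $ i0 $ k0\<bar> \<le> Max (range (\<lambda>k. \<bar>Q $ k $ k * x $ i0 $ k\<bar>))"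
      by (rule Max_ge) auto
    also have "\<dots> \<le> Max (range (\<lambda>i. Max (range (\<lambda>k. \<bar>Q $ k $ k * x $ i $ k\<bar>))))"
      by (rule Max_ge) auto
    finally show ?thesis using t0 unfolding True norm_inf[OF dQ] by linarith
  next
    case False
    define P where "P = real_of_ereal p"
    have "0 < \<bar>Q $ k0 $ k0 * x $ i0 $ k0\<bar> powr P" using t0 by simp
    also have "\<dots> \<le> (\<Sum>k\<in>UNIV. \<bar>Q $ k $ k * x $ i0 $ k\<bar> powr P)" by (rule member_le_sum) auto
    also have "\<dots> \<le> (\<Sum>i\<in>UNIV. \<Sum>k\<in>UNIV. \<bar>Q $ k $ k * x $ i $ k\<bar> powr P)"
      by (rule member_le_sum) (auto intro: sum_nonneg)
    finally show ?thesis unfolding norm_fin[OF dQ False p1] P_def[symmetric] by simp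
  qed
qed

theorem proposition5:
  fixes D Q :: "real^'n^'n" and L :: "real^'N^'N" and p :: ereal
  assumes "is_diag D" and "\<forall>i. D $ i $ i > 0"
    and "is_diag Q" and "\<forall>i. Q $ i $ i > 0"
    and "1 \<le> p"
    and "transpose L = L"
    and "\<forall>i j. i \<noteq> j \<longrightarrow> L $ i $ j \<le> 0"
    and "L *v vec 1 = 0"
  shows "M_plus p Q (\<lambda>u. - kron_apply L D u) = 0"
proof -
  have lin: "(- kron_apply L D u) - (- kron_apply L D v) = - kron_apply L D (u - v)" for u v
    unfolding kron_apply_def
    by (simp add: vec_eq_iff matrix_vector_mult_diff_distrib scaleR_diff_right sum_subtractf)
  have rowL: "(\<Sum>j\<in>UNIV. L $ i $ j) = 0" for i
    using arg_cong[OF assms(8), of "\<lambda>v. v $ i"] by (simp add: matrix_vector_mult_def)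
  define u1 :: "real^'n^'N" where "u1 = (\<chi> i. vec 1)"
  have u1z: "kron_apply L D u1 = 0"
    unfolding kron_apply_def u1_def
    by (simp add: vec_eq_iff scaleR_sum_left[symmetric] rowL)
  have u1n: "u1 \<noteq> 0" by (simp add: u1_def vec_eq_iff)
  have N1: "norm_pQ p Q u1 > 0" using norm_pos[OF assms(3,4,5) u1n] .
  let ?S = "{Lim (at_right 0)
        (\<lambda>h::real. (norm_pQ p Q (u - v + h *\<^sub>R ((- kron_apply L D u) - (- kron_apply L D v))) / norm_pQ p Q (u - v) - 1) / h)
      | u v. u \<noteq> v}"
  have le: "s \<le> 0" if "s \<in> ?S" for s
  proof -
    from that obtain u v where uv: "u \<noteq> v" and s: "s = Lim (at_right 0)
        (\<lambda>h::real. (norm_pQ p Q (u - v + h *\<^sub>R ((- kron_apply L D u) - (- kron_apply L D v))) / norm_pQ p Q (u - v) - 1) / h)"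
      by blast
    have "u - v \<noteq> 0" using uv by simp
    from key[OF assms this] show ?thesis unfolding s lin .
  qed
  have z: "0 \<in> ?S"
  proof -
    have "Lim (at_right 0)
        (\<lambda>h::real. (norm_pQ p Q (u1 - 0 + h *\<^sub>R ((- kron_apply L D u1) - (- kron_apply L D 0))) / norm_pQ p Q (u1 - 0) - 1) / h) = 0"
      using N1 u1z lin[of u1 0] by (simp add: tendsto_Lim)
    then show ?thesis using u1n by (intro CollectI exI[of _ u1] exI[of _ 0]) auto
  qed
  show ?thesis
    unfolding M_plus_def by (rule cSup_eq_maximum[OF z]) (use le in auto)
qed


end
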